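(* For every positive integer $q$ divisible by $3$, there exists a $q$-solvable undirected graph on $4q/3$ vertices with clique number $2q/3$.
   Context: A directed graph $D=(V,E)$ has arcs $E \subseteq \{(u,v)\in V^2 : u \neq v\}$; an undirected graph is identified with the directed graph having both arcs $(u,v)$ and $(v,u)$ for each edge. $N^-(v)=\{u:(u,v)\in E\}$. For $q\ge2$ let $[q]=\{0,\dots,q-1\}$. A $D$-function over $[q]$ is a map $f=(f_v)_{v\in V}:[q]^V\to[q]^V$ with each $f_v(x)$ depending only on $(x_u)_{u\in N^-(v)}$. $D$ is $q$-solvable if some $D$-function $f$ over $[q]$ has the property that for every $x\in[q]^V$ there is $v$ with $f_v(x)=x_v$. The clique number of an undirected graph is the size of its largest complete subgraph. *)

theory Defs
  imports Main "HOL-Library.FuncSet"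
begin

definition digraph :: "'v set \<Rightarrow> ('v \<Rightarrow> 'v \<Rightarrow> bool) \<Rightarrow> bool" where
  "digraph V E \<longleftrightarrow> (\<forall>u v. E u v \<longrightarrow> u \<in> V \<and> v \<in> V \<and> u \<noteq> v)"

definition undirected_graph :: "'v set \<Rightarrow> ('v \<Rightarrow> 'v \<Rightarrow> bool) \<Rightarrow> bool" where
  "undirected_graph V E \<longleftrightarrow> digraph V E \<and> (\<forall>u v. E u v \<longrightarrow> E v u)"

definition in_nbrs :: "('v \<Rightarrow> 'v \<Rightarrow> bool) \<Rightarrow> 'v \<Rightarrow> 'v set" where
  "in_nbrs E v = {u. E u v}"

text \<open>Configurations x \<in> [q]^V, represented as extensional functions V \<rightarrow> {0..<q}.\<close>
definition D_function :: "'v set \<Rightarrow> ('v \<Rightarrow> 'v \<Rightarrow> bool) \<Rightarrow> nat \<Rightarrow> ('v \<Rightarrow> ('v \<Rightarrow> nat) \<Rightarrow> nat) \<Rightarrow> bool" where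
  "D_function V E q f \<longleftrightarrow>
     (\<forall>v\<in>V. \<forall>x\<in>V \<rightarrow>\<^sub>E {..<q}. f v x < q) \<and>
     (\<forall>v\<in>V. \<forall>x\<in>V \<rightarrow>\<^sub>E {..<q}. \<forall>y\<in>V \<rightarrow>\<^sub>E {..<q}.
        (\<forall>u\<in>in_nbrs E v. x u = y u) \<longrightarrow> f v x = f v y)"

definition q_solvable :: "'v set \<Rightarrow> ('v \<Rightarrow> 'v \<Rightarrow> bool) \<Rightarrow> nat \<Rightarrow> bool" where
  "q_solvable V E q \<longleftrightarrow>
     (\<exists>f. D_function V E q f \<and> (\<forall>x\<in>V \<rightarrow>\<^sub>E {..<q}. \<exists>v\<in>V. f v x = x v))"

definition is_clique :: "'v set \<Rightarrow> ('v \<Rightarrow> 'v \<Rightarrow> bool) \<Rightarrow> 'v set \<Rightarrow> bool" where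
  "is_clique V E K \<longleftrightarrow> K \<subseteq> V \<and> (\<forall>u\<in>K. \<forall>w\<in>K. u \<noteq> w \<longrightarrow> E u w)"

definition clique_number :: "'v set \<Rightarrow> ('v \<Rightarrow> 'v \<Rightarrow> bool) \<Rightarrow> nat" where
  "clique_number V E = Max {card K | K. is_clique V E K}"

end

theory Submission
  imports Defs
begin

definition tab0 :: "nat list" where "tab0 = [0,0,1,1,0,2,2,1,2]"
definition tab2 :: "nat list" where "tab2 = [0,1,0,1,2,0,2,2,1]"
definition tab1 :: "nat list" where "tab1 = [2,2,1,2,1,0,1,0,0]"
definition tab3 :: "nat list" where "tab3 = [0,2,2,1,0,2,1,1,0]"

lemma three_cases: "(c::nat) < 3 \<Longrightarrow> c = 0 \<or> c = 1 \<or> c = 2" by auto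

lemma table_ok:
  assumes "c0 < 3" "c1 < 3" "c2 < 3" "c3 < 3"
  shows "c0 = tab0 ! (3*c1+c3) \<or> c2 = tab2 ! (3*c1+c3) \<or> c1 = tab1 ! (3*c0+c2) \<or> c3 = tab3 ! (3*c0+c2)"
proof -
  have "\<forall>c0\<in>{0,1,2::nat}. \<forall>c1\<in>{0,1,2::nat}. \<forall>c2\<in>{0,1,2::nat}. \<forall>c3\<in>{0,1,2::nat}.
    c0 = tab0 ! (3*c1+c3) \<or> c2 = tab2 ! (3*c1+c3) \<or> c1 = tab1 ! (3*c0+c2) \<or> c3 = tab3 ! (3*c0+c2)"
    by (simp add: tab0_def tab1_def tab2_def tab3_def)
  moreover have "c0 \<in> {0,1,2}" "c1 \<in> {0,1,2}" "c2 \<in> {0,1,2}" "c3 \<in> {0,1,2}" using assms by auto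
  ultimately show ?thesis by blast
qed

definition blk :: "nat \<Rightarrow> nat \<Rightarrow> nat set" where "blk k r = {r*k..<r*k+k}"
definition bsum :: "nat \<Rightarrow> nat \<Rightarrow> (nat \<Rightarrow> nat) \<Rightarrow> nat" where "bsum k r x = sum x (blk k r)"
definition cls :: "nat \<Rightarrow> nat \<Rightarrow> (nat \<Rightarrow> nat) \<Rightarrow> nat" where "cls k r x = (bsum k r x mod (3*k)) div k"
definition Gt :: "nat \<Rightarrow> nat \<Rightarrow> (nat \<Rightarrow> nat) \<Rightarrow> nat" where
  "Gt k r x = (if r = 0 then tab0 ! (3 * cls k 1 x + cls k 3 x)
     else if r = 2 then tab2 ! (3 * cls k 1 x + cls k 3 x)
     else if r = 1 then tab1 ! (3 * cls k 0 x + cls k 2 x)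
     else tab3 ! (3 * cls k 0 x + cls k 2 x))"
definition ff :: "nat \<Rightarrow> nat \<Rightarrow> (nat \<Rightarrow> nat) \<Rightarrow> nat" where
  "ff k v x = (k * Gt k (v div k) x + v mod k + 3*k - sum x (blk k (v div k) - {v}) mod (3*k)) mod (3*k)"
definition EE :: "nat \<Rightarrow> nat \<Rightarrow> nat \<Rightarrow> bool" where
  "EE k u v \<longleftrightarrow> u < 4*k \<and> v < 4*k \<and> u \<noteq> v \<and> (u div k = v div k \<or> odd (u div k + v div k))"

lemma blk_iff: "0 < k \<Longrightarrow> u \<in> blk k r \<longleftrightarrow> u div k = r"
  unfolding blk_def
proof
  assume k: "0 < k" and u: "u \<in> {r*k..<r*k+k}"
  then show "u div k = r" by (intro div_nat_eqI) (auto simp: mult.commute)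
next
  assume k: "0 < k" and u: "u div k = r"
  then show "u \<in> {r*k..<r*k+k}"
    using div_times_less_eq_dividend[of u k] dividend_less_div_times[OF k, of u] by (auto simp: mult.commute)
qed

lemma card_blk: "card (blk k r) = k" by (simp add: blk_def)

lemma cls_lt: "0 < k \<Longrightarrow> cls k r x < 3"
  unfolding cls_def by (simp add: less_mult_imp_div_less mult.commute)

lemma modfix:
  fixes q b xv tgt :: nat
  assumes "0 < q" "(b + xv) mod q = tgt" "b < q" "xv < q"
  shows "(tgt + q - b) mod q = xv"
proof (cases "b + xv < q")
  case True
  then have "tgt = b + xv" using assms(2) True mod_less[of "b+xv" q] by simp
  then have "tgt + q - b = xv + q" by simp
  then show ?thesis using assms by simp
next
  case False
  then have "tgt = b + xv - q" using assms
    by (simp add: le_mod_geq)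
  then show ?thesis using assms False by simp
qed

lemma blk_lt: "u \<in> blk k r \<Longrightarrow> r < 4 \<Longrightarrow> u < 4*k"
proof -
  assume a: "u \<in> blk k r" "r < 4"
  then have "u < r*k + k" by (simp add: blk_def)
  moreover have "Suc r * k \<le> 4*k" by (rule mult_le_mono1) (use a(2) in simp)
  moreover have "Suc r * k = r*k + k" by simp
  ultimately show ?thesis by linarith
qed

lemma nbr_eq:
  assumes k: "0 < k" and v: "v < 4*k" and r: "r < 4"
    and adj: "odd (r + v div k)"
    and ag: "\<forall>u\<in>in_nbrs (EE k) v. x u = y u"
  shows "bsum k r x = bsum k r y"
  unfolding bsum_def
proof (rule sum.cong)
  fix u assume u: "u \<in> blk k r"
  then have "u div k = r" using blk_iff[OF k] by simp
  moreover have "u < 4*k" using blk_lt[OF u r] .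
  moreover have "u \<noteq> v" using adj \<open>u div k = r\<close> by auto
  ultimately have "EE k u v" using v adj unfolding EE_def by simp
  then show "x u = y u" using ag by (simp add: in_nbrs_def)
qed simp

lemma own_eq:
  assumes k: "0 < k" and v: "v < 4*k"
    and ag: "\<forall>u\<in>in_nbrs (EE k) v. x u = y u"
  shows "sum x (blk k (v div k) - {v}) = sum y (blk k (v div k) - {v})"
proof (rule sum.cong)
  fix u assume u: "u \<in> blk k (v div k) - {v}"
  then have "u div k = v div k" using blk_iff[OF k] by simp
  moreover have "v div k < 4" using v k by (simp add: less_mult_imp_div_less)
  then have "u < 4*k" using blk_lt u by blast
  ultimately have "EE k u v" using v u unfolding EE_def by simp
  then show "x u = y u" using ag by (simp add: in_nbrs_def)
qed simp

lemma dep: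
  assumes k: "0 < k" and v: "v < 4*k"
    and ag: "\<forall>u\<in>in_nbrs (EE k) v. x u = y u"
  shows "ff k v x = ff k v y"
proof -
  have r4: "v div k < 4" using v k by (simp add: less_mult_imp_div_less)
  have b: "\<And>r. r < 4 \<Longrightarrow> odd (r + v div k) \<Longrightarrow> cls k r x = cls k r y"
    unfolding cls_def using nbr_eq[OF k v _ _ ag] by simp
  have "Gt k (v div k) x = Gt k (v div k) y"
  proof -
    have "v div k = 0 \<or> v div k = 1 \<or> v div k = 2 \<or> v div k = 3" using r4 by auto
    then show ?thesis
    proof (elim disjE)
      assume h: "v div k = 0"
      show ?thesis using b[of 1] b[of 3] h unfolding Gt_def by simp
    next
      assume h: "v div k = 1"
      show ?thesis using b[of 0] b[of 2] h unfolding Gt_def by simp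
    next
      assume h: "v div k = 2"
      show ?thesis using b[of 1] b[of 3] h unfolding Gt_def by simp
    next
      assume h: "v div k = 3"
      show ?thesis using b[of 0] b[of 2] h unfolding Gt_def by simp
    qed
  qed
  then show ?thesis unfolding ff_def using own_eq[OF k v ag] by simp
qed

lemma win:
  assumes k: "0 < k" and r: "r < 4" and c: "cls k r x = Gt k r x"
    and x: "x \<in> {..<4*k} \<rightarrow>\<^sub>E {..<3*k}"
  defines "s \<equiv> bsum k r x mod (3*k)"
  defines "v \<equiv> r*k + s mod k"
  shows "v < 4*k \<and> ff k v x = x v"
proof -
  have smk: "s mod k < k" using k by simp
  have vd: "v div k = r" unfolding v_def using smk k by simp
  have vm: "v mod k = s mod k" unfolding v_def by simp
  have vb: "v \<in> blk k r" using blk_iff[OF k] vd by simp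
  have v4: "v < 4*k" using blk_lt[OF vb r] .
  have "s div k = Gt k r x"
    using c unfolding cls_def s_def[symmetric] by simp
  then have tgt: "k * Gt k r x + s mod k = s"
    by (metis div_mult_mod_eq mult.commute)
  define t where "t = sum x (blk k r - {v})"
  have bs: "bsum k r x = t + x v"
    unfolding bsum_def t_def using vb by (simp add: blk_def sum.remove)
  have xv: "x v < 3*k" using x v4 by auto
  have "(t mod (3*k) + x v) mod (3*k) = s"
    unfolding s_def bs by (simp add: mod_add_left_eq)
  then have "(s + 3*k - t mod (3*k)) mod (3*k) = x v"
    using modfix[of "3*k" "t mod (3*k)" "x v" s] k xv by simp
  then have "ff k v x = x v"
    unfolding ff_def vd vm t_def[symmetric] tgt .
  then show ?thesis using v4 by simp
qed

lemma solve:
  assumes k: "0 < k" and x: "x \<in> {..<4*k} \<rightarrow>\<^sub>E {..<3*k}"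
  shows "\<exists>v\<in>{..<4*k}. ff k v x = x v"
proof -
  have T: "cls k 0 x = tab0 ! (3 * cls k 1 x + cls k 3 x) \<or> cls k 2 x = tab2 ! (3 * cls k 1 x + cls k 3 x)
     \<or> cls k 1 x = tab1 ! (3 * cls k 0 x + cls k 2 x) \<or> cls k 3 x = tab3 ! (3 * cls k 0 x + cls k 2 x)"
    by (rule table_ok[OF cls_lt[OF k] cls_lt[OF k] cls_lt[OF k] cls_lt[OF k]])
  have g0: "Gt k 0 x = tab0 ! (3 * cls k 1 x + cls k 3 x)" by (simp add: Gt_def)
  have g2: "Gt k 2 x = tab2 ! (3 * cls k 1 x + cls k 3 x)" by (simp add: Gt_def)
  have g1: "Gt k 1 x = tab1 ! (3 * cls k 0 x + cls k 2 x)" by (simp add: Gt_def)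
  have g3: "Gt k 3 x = tab3 ! (3 * cls k 0 x + cls k 2 x)" by (simp add: Gt_def)
  have "\<exists>r<4. cls k r x = Gt k r x"
    using T
  proof (elim disjE)
    assume "cls k 0 x = tab0 ! (3 * cls k 1 x + cls k 3 x)"
    then show ?thesis using g0 by (intro exI[of _ 0]) simp
  next
    assume "cls k 2 x = tab2 ! (3 * cls k 1 x + cls k 3 x)"
    then show ?thesis using g2 by (intro exI[of _ 2]) simp
  next
    assume "cls k 1 x = tab1 ! (3 * cls k 0 x + cls k 2 x)"
    then show ?thesis using g1 by (intro exI[of _ 1]) simp
  next
    assume "cls k 3 x = tab3 ! (3 * cls k 0 x + cls k 2 x)"
    then show ?thesis using g3 by (intro exI[of _ 3]) simp
  qed
  then obtain r where "r < 4" "cls k r x = Gt k r x" by blast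
  then show ?thesis using win[OF k _ _ x] by blast
qed

lemma part_bound:
  assumes k: "0 < k" and cl: "is_clique {..<4*k} (EE k) K" and S: "S \<subseteq> K"
    and par: "\<forall>u\<in>S. \<forall>w\<in>S. even (u div k + w div k)"
  shows "card S \<le> k"
proof (cases "S = {}")
  case True then show ?thesis by simp
next
  case False
  then obtain u0 where u0: "u0 \<in> S" by blast
  have sub: "S \<subseteq> blk k (u0 div k)"
  proof
    fix u assume u: "u \<in> S"
    have "u div k = u0 div k"
    proof (cases "u = u0")
      case False
      then have "EE k u u0" using cl u u0 S unfolding is_clique_def by blast
      moreover have "even (u div k + u0 div k)" using par u u0 by blast
      ultimately show ?thesis unfolding EE_def by blast
    qed simp
    then show "u \<in> blk k (u0 div k)" using blk_iff[OF k] by simp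
  qed
  have fin: "finite (blk k (u0 div k))" by (simp add: blk_def)
  have "card S \<le> card (blk k (u0 div k))" using card_mono[OF fin sub] .
  then show ?thesis by (simp add: card_blk)
qed

lemma clique_bound:
  assumes k: "0 < k" and cl: "is_clique {..<4*k} (EE k) K"
  shows "card K \<le> 2*k"
proof -
  define Ke where "Ke = {u\<in>K. even (u div k)}"
  define Ko where "Ko = {u\<in>K. odd (u div k)}"
  have "K = Ke \<union> Ko" unfolding Ke_def Ko_def by auto
  then have "card K \<le> card Ke + card Ko" by (metis card_Un_le)
  moreover have "card Ke \<le> k"
    by (rule part_bound[OF k cl]) (auto simp: Ke_def)
  moreover have "card Ko \<le> k"
    by (rule part_bound[OF k cl]) (auto simp: Ko_def)
  ultimately show ?thesis by simp
qed

lemma clique_ex: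
  assumes k: "0 < k"
  shows "is_clique {..<4*k} (EE k) {..<2*k}"
  unfolding is_clique_def
proof (intro conjI ballI impI)
  show "{..<2*k} \<subseteq> {..<4*k}" by auto
  fix u w assume u: "u \<in> {..<2*k}" and w: "w \<in> {..<2*k}" and ne: "u \<noteq> w"
  have "u div k < 2" "w div k < 2" using u w k by (auto simp: less_mult_imp_div_less)
  then have "u div k = 0 \<or> u div k = 1" "w div k = 0 \<or> w div k = 1" by linarith+
  then have "u div k = w div k \<or> odd (u div k + w div k)" by auto
  then show "EE k u w" using u w ne unfolding EE_def by simp
qed

theorem corollary6:
  fixes q :: nat
  assumes "0 < q" and "3 dvd q"
  shows "\<exists>(V :: nat set) E. finite V \<and> card V = 4 * q div 3 \<and> undirected_graph V E \<and>
           q_solvable V E q \<and> clique_number V E = 2 * q div 3"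
proof -
  obtain k where q: "q = 3*k" using assms(2) by blast
  have k: "0 < k" using assms(1) q by simp
  have c1: "4 * q div 3 = 4*k" "2 * q div 3 = 2*k" using q by simp_all
  have ug: "undirected_graph {..<4*k} (EE k)"
    unfolding undirected_graph_def digraph_def
  proof (intro conjI allI impI)
    fix u v assume "EE k u v"
    then show "u \<in> {..<4*k}" "v \<in> {..<4*k}" "u \<noteq> v" unfolding EE_def by simp_all
  next
    fix u v assume h: "EE k u v"
    have "u div k + v div k = v div k + u div k" by simp
    then show "EE k v u" using h unfolding EE_def by metis
  qed
  have df: "D_function {..<4*k} (EE k) (3*k) (ff k)"
    unfolding D_function_def
  proof (intro conjI ballI impI)
    fix v and x :: "nat \<Rightarrow> nat" assume "v \<in> {..<4*k}"
    show "ff k v x < 3*k" unfolding ff_def using k by simp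
  next
    fix v and x y :: "nat \<Rightarrow> nat" assume "v \<in> {..<4*k}" "\<forall>u\<in>in_nbrs (EE k) v. x u = y u"
    then show "ff k v x = ff k v y" using dep[OF k] by simp
  qed
  have qs: "q_solvable {..<4*k} (EE k) (3*k)"
    unfolding q_solvable_def using df solve[OF k] by blast
  have cn: "clique_number {..<4*k} (EE k) = 2*k"
    unfolding clique_number_def
  proof (rule Max_eqI)
    have "{card K |K. is_clique {..<4*k} (EE k) K} \<subseteq> {..2*k}"
      using clique_bound[OF k] by auto
    then show "finite {card K |K. is_clique {..<4*k} (EE k) K}" using finite_subset by blast
  next
    fix y assume "y \<in> {card K |K. is_clique {..<4*k} (EE k) K}"
    then show "y \<le> 2*k" using clique_bound[OF k] by auto
  next
    show "2*k \<in> {card K |K. is_clique {..<4*k} (EE k) K}"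
      using clique_ex[OF k] by force
  qed
  have main: "finite {..<4*k} \<and> card {..<4*k} = 4*k \<and> undirected_graph {..<4*k} (EE k) \<and>
           q_solvable {..<4*k} (EE k) (3*k) \<and> clique_number {..<4*k} (EE k) = 2*k"
    using ug qs cn by simp
  have c2: "4*(3*k) div 3 = 4*k" "2*(3*k) div 3 = 2*k" by simp_all
  show ?thesis unfolding q c2 by (rule exI[of _ "{..<4*k}"], rule exI[of _ "EE k"], rule main)
qed

end
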